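(* Let $A$ be a random variable with $\mathbb P(A>0)=1$ and law $\rho$, and let $\mu$ be a solution of equation (2) for $\rho$. Then: (a) $\int_0^\infty e^{sx}\mu(dx)<\infty$ for some $s>0$ if and only if $\operatorname{ess\,sup}\rho\le1$, i.e. $\mathbb P(A\le1)=1$; (b) if $\operatorname{ess\,sup}\rho<1$ (i.e. $\mathbb P(A\le c)=1$ for some $c<1$), then $\int_0^\infty e^{sx}\mu(dx)<\infty$ for every $s\in\mathbb R$, so the characteristic function of $\mu$ extends to an entire function.
   Context: For a probability measure $\nu$ on $[0,\infty)$ with mean $m\in(0,\infty)$, its size-biased distribution is $\nu_{sb}(dx)=m^{-1}x\,\nu(dx)$. A probability measure $\mu$ on $[0,\infty)$ with mean in $(0,\infty)$ is a solution of equation (2) for $\rho$ if $\eta_{sb}\overset{d}{=}A\eta_{sb}+\eta$, where $\eta\sim\mu$, $\eta_{sb}\sim\mu_{sb}$ and $A\sim\rho$ are mutually independent. $\operatorname{ess\,sup}\rho=\inf\{c:\rho((c,\infty))=0\}$. *)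

theory Defs
  imports "HOL-Probability.Probability"
begin

definition mean :: "real measure \<Rightarrow> real" where
  "mean M = (\<integral>x. x \<partial>M)"

definition size_biased :: "real measure \<Rightarrow> real measure" where
  "size_biased M = density M (\<lambda>x. ennreal (x / mean M))"

text \<open>A probability measure mu on [0,infinity) with mean in (0,infinity) solves equation (2)
  for rho if  eta_sb =d A * eta_sb + eta  with eta ~ mu, eta_sb ~ mu_sb, A ~ rho independent.\<close>
definition solves_eq2 :: "real measure \<Rightarrow> real measure \<Rightarrow> bool" where
  "solves_eq2 \<rho> \<mu> \<longleftrightarrow>
     prob_space \<mu> \<and> sets \<mu> = sets borel \<and> \<mu> {x. x < 0} = 0 \<and>
     integrable \<mu> (\<lambda>x. x) \<and> 0 < mean \<mu> \<and>
     distr (\<rho> \<Otimes>\<^sub>M (size_biased \<mu> \<Otimes>\<^sub>M \<mu>)) borel (\<lambda>(a, x, y). a * x + y)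
       = size_biased \<mu>"

end

theory Submission
  imports Defs
begin


locale eq2 =
  fixes \<rho> \<mu> :: "real measure"
  assumes rho_prob: "prob_space \<rho>" and sets_rho: "sets \<rho> = sets borel"
    and rho_pos: "AE a in \<rho>. a > 0" and sol: "solves_eq2 \<rho> \<mu>"
begin

definition "m = mean \<mu>"
definition "\<nu> = size_biased \<mu>"

lemma mu_prob: "prob_space \<mu>" and sets_mu: "sets \<mu> = sets borel"
  and mu_int: "integrable \<mu> (\<lambda>x. x)" and m_pos: "m > 0"
  using sol by (auto simp: solves_eq2_def m_def)

lemma space_mu: "space \<mu> = UNIV" using sets_eq_imp_space_eq[OF sets_mu] by simp
lemma space_rho: "space \<rho> = UNIV" using sets_eq_imp_space_eq[OF sets_rho] by simp

lemma mu_nonneg: "AE y in \<mu>. y \<ge> 0"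
proof -
  have "emeasure \<mu> {x. x < 0} = 0" using sol by (simp add: solves_eq2_def)
  then show ?thesis
    by (intro AE_I[where N="{x. x<0}"]) (auto simp: sets_mu space_mu)
qed

lemma meas_mu[measurable_cong]: "sets \<mu> = sets borel" by (rule sets_mu)

lemma m_eq: "m = (\<integral>x. x \<partial>\<mu>)" by (simp add: m_def mean_def)

lemma nn_m: "(\<integral>\<^sup>+x. ennreal x \<partial>\<mu>) = ennreal m"
  using nn_integral_eq_integral[OF mu_int mu_nonneg] m_eq by simp

lemma sets_nu: "sets \<nu> = sets borel" by (simp add: \<nu>_def size_biased_def sets_mu)
lemma space_nu: "space \<nu> = UNIV" using sets_eq_imp_space_eq[OF sets_nu] by simp

lemma nn_nu: assumes [measurable]: "h \<in> borel_measurable borel"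
  shows "(\<integral>\<^sup>+z. h z \<partial>\<nu>) = (\<integral>\<^sup>+y. ennreal (y/m) * h y \<partial>\<mu>)"
  unfolding \<nu>_def size_biased_def m_def[symmetric]
  by (subst nn_integral_density) (auto simp: sets_mu measurable_cong_sets[OF sets_mu refl])

lemma dens: assumes [measurable]: "h \<in> borel_measurable borel"
  shows "(\<integral>\<^sup>+y. ennreal y * h y \<partial>\<mu>) = ennreal m * (\<integral>\<^sup>+z. h z \<partial>\<nu>)"
proof -
  have "ennreal m * (\<integral>\<^sup>+z. h z \<partial>\<nu>) = (\<integral>\<^sup>+y. ennreal m * (ennreal (y/m) * h y) \<partial>\<mu>)"
    by (simp add: nn_nu nn_integral_cmult measurable_cong_sets[OF sets_mu refl])
  also have "\<dots> = (\<integral>\<^sup>+y. ennreal y * h y \<partial>\<mu>)"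
    using mu_nonneg
  proof (intro nn_integral_cong_AE, eventually_elim)
    case (elim y)
    have "ennreal m * ennreal (y/m) = ennreal y" using m_pos elim by (simp add: ennreal_mult[symmetric])
    then show ?case by (simp add: mult.assoc[symmetric])
  qed
  finally show ?thesis ..
qed

lemma nu_prob: "prob_space \<nu>"
proof
  have "emeasure \<nu> (space \<nu>) = (\<integral>\<^sup>+z. 1 \<partial>\<nu>)" by (simp add: nn_integral_const)
  also have "\<dots> = (\<integral>\<^sup>+y. ennreal (y/m) * 1 \<partial>\<mu>)" by (rule nn_nu) simp
  also have "\<dots> = (\<integral>\<^sup>+y. ennreal (y/m) \<partial>\<mu>)" by simp
  also have "\<dots> = (\<integral>\<^sup>+y. ennreal y * ennreal (1/m) \<partial>\<mu>)"
    using mu_nonneg by (intro nn_integral_cong_AE) (auto simp: ennreal_mult'[symmetric])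
  also have "\<dots> = ennreal m * ennreal (1/m)"
    by (subst nn_integral_multc) (auto simp: nn_m measurable_cong_sets[OF sets_mu refl])
  also have "\<dots> = 1" using m_pos by (simp add: ennreal_mult'[symmetric])
  finally show "emeasure \<nu> (space \<nu>) = 1" .
qed

lemma nu_nonneg: "AE z in \<nu>. z \<ge> 0"
  unfolding \<nu>_def size_biased_def
  by (subst AE_density) (auto simp: measurable_cong_sets[OF sets_mu refl] intro: AE_mp[OF mu_nonneg])

lemma meas_rho[measurable_cong]: "sets \<rho> = sets borel" by (rule sets_rho)
lemma meas_nu[measurable_cong]: "sets \<nu> = sets borel" by (rule sets_nu)

lemma distr_eq: "distr (\<rho> \<Otimes>\<^sub>M (\<nu> \<Otimes>\<^sub>M \<mu>)) borel (\<lambda>(a, x, y). a * x + y) = \<nu>"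
  using sol by (simp add: solves_eq2_def \<nu>_def)

lemma sets_prod: "sets (\<rho> \<Otimes>\<^sub>M (\<nu> \<Otimes>\<^sub>M \<mu>)) = sets (borel \<Otimes>\<^sub>M (borel \<Otimes>\<^sub>M borel))"
  by (intro sets_pair_measure_cong sets_rho sets_nu sets_mu)

lemma ident: assumes g[measurable]: "g \<in> borel_measurable borel"
  shows "(\<integral>\<^sup>+z. g z \<partial>\<nu>) = (\<integral>\<^sup>+a. \<integral>\<^sup>+x. \<integral>\<^sup>+y. g (a*x+y) \<partial>\<mu> \<partial>\<nu> \<partial>\<rho>)"
proof -
  interpret nu: prob_space \<nu> by (rule nu_prob)
  interpret mu: prob_space \<mu> by (rule mu_prob)
  interpret numu: pair_prob_space \<nu> \<mu> by unfold_locales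
  have fm: "(\<lambda>(a, x, y). a * x + y) \<in> \<rho> \<Otimes>\<^sub>M (\<nu> \<Otimes>\<^sub>M \<mu>) \<rightarrow>\<^sub>M borel"
    unfolding measurable_cong_sets[OF sets_prod refl] by measurable
  have "(\<integral>\<^sup>+z. g z \<partial>\<nu>) = (\<integral>\<^sup>+z. g z \<partial>(distr (\<rho> \<Otimes>\<^sub>M (\<nu> \<Otimes>\<^sub>M \<mu>)) borel (\<lambda>(a, x, y). a * x + y)))"
    by (simp add: distr_eq)
  also have "\<dots> = (\<integral>\<^sup>+p. g ((\<lambda>(a, x, y). a * x + y) p) \<partial>(\<rho> \<Otimes>\<^sub>M (\<nu> \<Otimes>\<^sub>M \<mu>)))"
    by (rule nn_integral_distr[OF fm]) simp
  also have "\<dots> = (\<integral>\<^sup>+a. \<integral>\<^sup>+xy. g ((\<lambda>(x, y). a * x + y) xy) \<partial>(\<nu> \<Otimes>\<^sub>M \<mu>) \<partial>\<rho>)"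
    by (subst numu.nn_integral_fst[symmetric])
       (auto simp: case_prod_beta intro!: measurable_compose[OF fm g])
  also have "\<dots> = (\<integral>\<^sup>+a. \<integral>\<^sup>+x. \<integral>\<^sup>+y. g (a*x+y) \<partial>\<mu> \<partial>\<nu> \<partial>\<rho>)"
  proof (intro nn_integral_cong)
    fix a
    have m2: "(\<lambda>xy. g (a * fst xy + snd xy)) \<in> borel_measurable (\<nu> \<Otimes>\<^sub>M \<mu>)"
      unfolding measurable_cong_sets[OF sets_pair_measure_cong[OF sets_nu sets_mu] refl] by measurable
    show "(\<integral>\<^sup>+xy. g ((\<lambda>(x, y). a * x + y) xy) \<partial>(\<nu> \<Otimes>\<^sub>M \<mu>)) = (\<integral>\<^sup>+x. \<integral>\<^sup>+y. g (a*x+y) \<partial>\<mu> \<partial>\<nu>)"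
      using mu.nn_integral_fst[OF m2] by (simp add: case_prod_beta)
  qed
  finally show ?thesis .
qed

definition "L s = (\<integral>\<^sup>+y. ennreal (exp (s*y)) \<partial>\<mu>)"
definition "Lsb s = (\<integral>\<^sup>+z. ennreal (exp (s*z)) \<partial>\<nu>)"
definition "Mf s = (\<integral>\<^sup>+a. \<integral>\<^sup>+x. ennreal (exp (s*a*x)) \<partial>\<nu> \<partial>\<rho>)"

lemma factor:
  assumes [measurable]: "(\<lambda>(a,x). g1 a x) \<in> borel_measurable (borel \<Otimes>\<^sub>M borel)" "g2 \<in> borel_measurable borel"
  shows "(\<integral>\<^sup>+a. \<integral>\<^sup>+x. \<integral>\<^sup>+y. g1 a x * g2 y \<partial>\<mu> \<partial>\<nu> \<partial>\<rho>)
        = (\<integral>\<^sup>+a. \<integral>\<^sup>+x. g1 a x \<partial>\<nu> \<partial>\<rho>) * (\<integral>\<^sup>+y. g2 y \<partial>\<mu>)"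
proof -
  interpret nu: prob_space \<nu> by (rule nu_prob)
  have m1[measurable]: "g1 a \<in> borel_measurable borel" for a
    using measurable_compose[OF measurable_Pair2'[of a borel borel] assms(1)] by simp
  have m3: "(\<lambda>a. \<integral>\<^sup>+x. g1 a x \<partial>\<nu>) \<in> borel_measurable \<rho>"
  proof -
    have "(\<lambda>(a,x). g1 a x) \<in> borel_measurable (\<rho> \<Otimes>\<^sub>M \<nu>)"
      using assms(1) measurable_cong_sets[OF sets_pair_measure_cong[OF sets_rho sets_nu] refl] by simp
    from nu.borel_measurable_nn_integral[OF this] show ?thesis by simp
  qed
  have "(\<integral>\<^sup>+a. \<integral>\<^sup>+x. \<integral>\<^sup>+y. g1 a x * g2 y \<partial>\<mu> \<partial>\<nu> \<partial>\<rho>)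
       = (\<integral>\<^sup>+a. \<integral>\<^sup>+x. g1 a x * (\<integral>\<^sup>+y. g2 y \<partial>\<mu>) \<partial>\<nu> \<partial>\<rho>)"
    by (intro nn_integral_cong nn_integral_cmult) simp
  also have "\<dots> = (\<integral>\<^sup>+a. (\<integral>\<^sup>+x. g1 a x \<partial>\<nu>) * (\<integral>\<^sup>+y. g2 y \<partial>\<mu>) \<partial>\<rho>)"
    by (intro nn_integral_cong nn_integral_multc) simp
  also have "\<dots> = (\<integral>\<^sup>+a. \<integral>\<^sup>+x. g1 a x \<partial>\<nu> \<partial>\<rho>) * (\<integral>\<^sup>+y. g2 y \<partial>\<mu>)"
    by (rule nn_integral_multc[OF m3])
  finally show ?thesis .
qed

lemma F1: "Lsb s = Mf s * L s"
proof -
  have "Lsb s = (\<integral>\<^sup>+a. \<integral>\<^sup>+x. \<integral>\<^sup>+y. ennreal (exp (s*(a*x+y))) \<partial>\<mu> \<partial>\<nu> \<partial>\<rho>)"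
    unfolding Lsb_def by (rule ident) simp
  also have "\<dots> = (\<integral>\<^sup>+a. \<integral>\<^sup>+x. \<integral>\<^sup>+y. ennreal (exp (s*a*x)) * ennreal (exp (s*y)) \<partial>\<mu> \<partial>\<nu> \<partial>\<rho>)"
    by (intro nn_integral_cong) (simp add: ennreal_mult[symmetric] exp_add[symmetric] algebra_simps)
  also have "\<dots> = Mf s * L s"
    unfolding Mf_def L_def by (rule factor) auto
  finally show ?thesis .
qed

lemma L_ge: assumes "s \<ge> 0" shows "L s \<ge> ennreal (1 + s*m)"
proof -
  have e: "ennreal (1+s*m) = ennreal 1 + ennreal (s*m)" by (rule ennreal_plus) (use assms m_pos in auto)
  have "ennreal (1 + s*m) = (\<integral>\<^sup>+y. 1 \<partial>\<mu>) + ennreal s * (\<integral>\<^sup>+y. ennreal y \<partial>\<mu>)"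
    using assms m_pos prob_space.emeasure_space_1[OF mu_prob]
    by (simp add: e nn_m nn_integral_const ennreal_mult[symmetric])
  also have "\<dots> = (\<integral>\<^sup>+y. 1 + ennreal s * ennreal y \<partial>\<mu>)"
    by (subst nn_integral_add) (auto simp: nn_integral_cmult)
  also have "\<dots> \<le> L s" unfolding L_def
    using mu_nonneg
  proof (intro nn_integral_mono_AE, eventually_elim)
    case (elim y)
    have "1 + s*y \<le> exp (s*y)" by (rule exp_ge_add_one_self)
    then have "ennreal (1 + s*y) \<le> ennreal (exp (s*y))" by (rule ennreal_leI)
    moreover have "ennreal (1 + s*y) = 1 + ennreal (s*y)" using ennreal_plus[of 1 "s*y"] elim assms by simp
    ultimately show ?case using elim assms by (simp add: ennreal_mult[symmetric])
  qed
  finally show ?thesis .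
qed

lemma Lsb_ge1: assumes "s \<ge> 0" shows "Lsb s \<ge> 1"
proof -
  have "1 = (\<integral>\<^sup>+z. 1 \<partial>\<nu>)" using prob_space.emeasure_space_1[OF nu_prob] by (simp add: nn_integral_const)
  also have "\<dots> \<le> Lsb s" unfolding Lsb_def using nu_nonneg
    by (intro nn_integral_mono_AE, eventually_elim) (use assms in auto)
  finally show ?thesis .
qed

lemma Lsb_mono: assumes "0 \<le> s" "s \<le> t" shows "Lsb s \<le> Lsb t"
  unfolding Lsb_def using nu_nonneg
  by (intro nn_integral_mono_AE, eventually_elim) (use assms in \<open>auto intro: mult_right_mono\<close>)

lemma Lsb_fin: assumes "0 \<le> s" "s < s0" "L s0 < \<infinity>" shows "Lsb s < \<infinity>"
proof -
  have "Lsb s = (\<integral>\<^sup>+y. ennreal (y/m) * ennreal (exp (s*y)) \<partial>\<mu>)"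
    unfolding Lsb_def by (rule nn_nu) simp
  also have "\<dots> \<le> (\<integral>\<^sup>+y. ennreal (1/(m*(s0-s))) * ennreal (exp (s0*y)) \<partial>\<mu>)"
    using mu_nonneg
  proof (intro nn_integral_mono_AE, eventually_elim)
    case (elim y)
    have "(s0-s)*y \<le> exp ((s0-s)*y)" using exp_ge_add_one_self[of "(s0-s)*y"] by linarith
    then have "(s0-s)*y * exp (s*y) \<le> exp ((s0-s)*y) * exp (s*y)"
      by (intro mult_right_mono) auto
    also have "\<dots> = exp (s0*y)" by (simp add: exp_add[symmetric] algebra_simps)
    finally have "y * exp (s*y) \<le> exp (s0*y) / (s0-s)" using assms by (simp add: field_simps)
    then have "(y * exp (s*y))/m \<le> (exp (s0*y) / (s0-s))/m"
      using m_pos by (intro divide_right_mono) auto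
    then have "y/m * exp (s*y) \<le> 1/(m*(s0-s)) * exp (s0*y)"
      by (simp add: field_simps)
    then show ?case using elim m_pos assms
      by (simp add: ennreal_mult[symmetric] del: ennreal_1)
  qed
  also have "\<dots> = ennreal (1/(m*(s0-s))) * L s0"
    unfolding L_def by (rule nn_integral_cmult) simp
  also have "\<dots> < \<infinity>" using assms by (simp add: ennreal_mult_less_top)
  finally show ?thesis .
qed

lemma Mf_ge: assumes "s \<ge> 0" "c \<ge> 0"
  shows "emeasure \<rho> {a. c < a} * Lsb (c * s) \<le> Mf s"
proof -
  have "emeasure \<rho> {a. c < a} * Lsb (c * s) = (\<integral>\<^sup>+a. Lsb (c * s) * indicator {a. c < a} a \<partial>\<rho>)"
    by (subst nn_integral_cmult_indicator) (auto simp: sets_rho mult.commute)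
  also have "\<dots> \<le> Mf s" unfolding Mf_def
  proof (intro nn_integral_mono)
    fix a
    show "Lsb (c * s) * indicator {a. c < a} a \<le> (\<integral>\<^sup>+x. ennreal (exp (s*a*x)) \<partial>\<nu>)"
    proof (cases "c < a")
      case True
      have "Lsb (c * s) \<le> (\<integral>\<^sup>+x. ennreal (exp (s*a*x)) \<partial>\<nu>)" unfolding Lsb_def using nu_nonneg
      proof (intro nn_integral_mono_AE, eventually_elim)
        case (elim x)
        have cs: "c * s \<le> a * s" using True assms by (intro mult_right_mono) auto
        have "c * s*x \<le> a * s*x" using mult_right_mono[OF cs, of x] elim by auto
        then have "c * s*x \<le> s*a*x" by (simp add: mult_ac)
        then show ?case by simp
      qed
      then show ?thesis using True by simp
    qed simp
  qed
  finally show ?thesis .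
qed

lemma onlyif: assumes "s0 > 0" "L s0 < \<infinity>" shows "esssup \<rho> (\<lambda>a. ereal a) \<le> 1"
proof (rule ccontr)
  assume "\<not> ?thesis"
  then have "1 < esssup \<rho> (\<lambda>a. ereal a)" by simp
  then obtain c where c1: "1 < ereal c" and c2: "ereal c < esssup \<rho> (\<lambda>a. ereal a)"
    using ereal_dense2 by blast
  have "emeasure \<rho> {x \<in> space \<rho>. ereal c < ereal x} > 0"
    by (rule esssup_pos_measure[OF _ c2]) (simp add: measurable_cong_sets[OF sets_rho refl])
  then have pp: "emeasure \<rho> {a. c < a} > 0" by (simp add: space_rho)
  define p where "p = measure \<rho> {a. c < a}"
  have pe: "emeasure \<rho> {a. c < a} = ennreal p"
    unfolding p_def by (rule finite_measure.emeasure_eq_measure[OF prob_space.finite_measure[OF rho_prob]])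
  have p0: "p > 0" using pp pe by simp
  have c1': "c > 1" using c1 by simp
  have key: "Lsb (c * s) < \<infinity> \<and> p * (1 + s*m) \<le> 1" if s: "s > 0" "Lsb s < \<infinity>" for s
  proof -
    obtain l where l: "Lsb s = ennreal l" "l \<ge> 1"
      using s Lsb_ge1[of s] by (cases "Lsb s") (auto simp: top_unique)
    have "ennreal p * Lsb (c * s) * ennreal (1 + s*m) \<le> Mf s * L s"
      using Mf_ge[of s c] L_ge[of s] s c1' pe by (intro mult_mono) auto
    also have "\<dots> = Lsb s" by (simp add: F1)
    finally have ineq: "ennreal (p * (1 + s*m)) * Lsb (c * s) \<le> Lsb s"
      using p0 s m_pos by (simp add: ennreal_mult mult_ac)
    have "s*m > 0" using s m_pos by simp
    then have pos: "p * (1 + s*m) > 0" using p0 by simp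
    have fin: "Lsb (c * s) < \<infinity>"
    proof (rule ccontr)
      assume "\<not> Lsb (c * s) < \<infinity>"
      then have "Lsb (c * s) = \<top>" by (simp add: less_top[symmetric])
      then have "ennreal (p * (1 + s*m)) * Lsb (c * s) = \<top>" using pos p0 \<open>s*m > 0\<close> by (simp add: ennreal_mult_top)
      with ineq s show False by (simp add: top_unique)
    qed
    have "Lsb s \<le> Lsb (c * s)" using Lsb_mono[of s "c * s"] s c1' by simp
    with ineq have "ennreal (p * (1 + s*m)) * Lsb s \<le> Lsb s" by (meson mult_left_mono order_trans zero_le)
    then have "ennreal (p * (1 + s*m)) * ennreal l \<le> ennreal l" using l by simp
    then have "p * (1 + s*m) * l \<le> l" using l pos by (simp add: ennreal_mult[symmetric])
    then have "p * (1 + s*m) \<le> 1" using l by (simp add: mult_le_cancel_right2)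
    with fin show ?thesis by simp
  qed
  define s1 where "s1 = s0/2"
  have s1: "s1 > 0" "Lsb s1 < \<infinity>" using assms Lsb_fin[of s1 s0] by (auto simp: s1_def)
  have fin: "Lsb (c^n * s1) < \<infinity>" for n
  proof (induction n)
    case 0 then show ?case using s1 by simp
  next
    case (Suc n)
    have "c^n * s1 > 0" using c1' s1 by simp
    from key[OF this Suc] show ?case by (simp add: mult.assoc)
  qed
  obtain n where n: "(1/p - 1)/(s1*m) < c^n" using real_arch_pow[OF c1'] by blast
  have "c^n * s1 > 0" using c1' s1 by simp
  from key[OF this fin[of n]] have "p * (1 + c^n* s1*m) \<le> 1" by simp
  then have "1 + c^n* s1*m \<le> 1/p" using p0 by (simp add: field_simps)
  then have "c^n \<le> (1/p - 1)/(s1*m)" using s1 m_pos by (simp add: field_simps)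
  with n show False by simp
qed

lemma Mf_mono: assumes "0 \<le> t" "t \<le> x" shows "Mf t \<le> Mf x"
  unfolding Mf_def using rho_pos
proof (intro nn_integral_mono_AE, eventually_elim)
  case (elim a)
  show ?case using nu_nonneg
  proof (intro nn_integral_mono_AE, eventually_elim)
    case (elim z)
    have "0 \<le> a * z" using \<open>0 < a\<close> elim by simp
    then have "t * (a*z) \<le> x * (a*z)" using assms by (intro mult_right_mono) auto
    then show ?case by (simp add: mult.assoc)
  qed
qed

lemma Mf_le_c: assumes "AE a in \<rho>. a \<le> c" "x \<ge> 0" shows "Mf x \<le> Lsb (c * x)"
proof -
  have "Mf x \<le> (\<integral>\<^sup>+a. Lsb (c * x) \<partial>\<rho>)"
    unfolding Mf_def using assms(1)
  proof (intro nn_integral_mono_AE, eventually_elim)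
    case (elim a)
    show ?case unfolding Lsb_def using nu_nonneg
    proof (intro nn_integral_mono_AE, eventually_elim)
      case (elim z)
      have "a * (x*z) \<le> c * (x*z)" using \<open>a \<le> c\<close> elim assms by (intro mult_right_mono) auto
      then show ?case by (simp add: mult_ac)
    qed
  qed
  also have "\<dots> = Lsb (c * x)" using prob_space.emeasure_space_1[OF rho_prob] by (simp add: nn_integral_const)
  finally show ?thesis .
qed

definition "LK K t = (\<integral>\<^sup>+y. ennreal (exp (t*y)) * indicator {..K} y \<partial>\<mu>)"
definition "DK K t = (\<integral>\<^sup>+y. ennreal y * (ennreal (exp (t*y)) * indicator {..K} y) \<partial>\<mu>)"

lemma DK_bound: assumes "0 \<le> t" shows "DK K t \<le> ennreal m * (Mf t * LK K t)"
proof -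
  have "DK K t = ennreal m * (\<integral>\<^sup>+z. ennreal (exp (t*z)) * indicator {..K} z \<partial>\<nu>)"
    unfolding DK_def by (rule dens) simp
  also have "(\<integral>\<^sup>+z. ennreal (exp (t*z)) * indicator {..K} z \<partial>\<nu>)
     = (\<integral>\<^sup>+a. \<integral>\<^sup>+x. \<integral>\<^sup>+y. ennreal (exp (t*(a*x+y))) * indicator {..K} (a*x+y) \<partial>\<mu> \<partial>\<nu> \<partial>\<rho>)"
    by (rule ident) simp
  also have "\<dots> \<le> (\<integral>\<^sup>+a. \<integral>\<^sup>+x. \<integral>\<^sup>+y. ennreal (exp (t*a*x)) * (ennreal (exp (t*y)) * indicator {..K} y) \<partial>\<mu> \<partial>\<nu> \<partial>\<rho>)"
    using rho_pos
  proof (intro nn_integral_mono_AE, eventually_elim)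
    case (elim a)
    show ?case using nu_nonneg
    proof (intro nn_integral_mono_AE, eventually_elim)
      case (elim x)
      show ?case
      proof (intro nn_integral_mono)
        fix y
        have ax: "0 \<le> a*x" using \<open>0 < a\<close> elim by simp
        show "ennreal (exp (t*(a*x+y))) * indicator {..K} (a*x+y) \<le> ennreal (exp (t*a*x)) * (ennreal (exp (t*y)) * indicator {..K} y)"
          using ax by (auto simp: indicator_def ennreal_mult[symmetric] exp_add[symmetric] algebra_simps)
      qed
    qed
  qed
  also have "\<dots> = Mf t * LK K t" unfolding Mf_def LK_def by (rule factor) auto
  finally show ?thesis by (simp add: mult_left_mono)
qed

lemma LK_step: assumes "0 \<le> h" "0 \<le> K" shows "LK K (t+h) \<le> LK K t + ennreal (h * exp (h*K)) * DK K t"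
proof -
  have "LK K (t+h) \<le> (\<integral>\<^sup>+y. ennreal (exp (t*y)) * indicator {..K} y + ennreal (h * exp (h*K)) * (ennreal y * (ennreal (exp (t*y)) * indicator {..K} y)) \<partial>\<mu>)"
    unfolding LK_def using mu_nonneg
  proof (intro nn_integral_mono_AE, eventually_elim)
    case (elim y)
    show ?case
    proof (cases "y \<le> K")
      case True
      have u: "exp (h*y) \<le> 1 + h*y*exp (h*y)"
      proof -
        have "1 - h*y \<le> exp (-(h*y))" using exp_ge_add_one_self[of "-(h*y)"] by simp
        then have "(1 - h*y) * exp (h*y) \<le> exp (-(h*y)) * exp (h*y)" by (intro mult_right_mono) auto
        then show ?thesis by (simp add: exp_minus field_simps)
      qed
      have "exp (h*y) \<le> exp (h*K)" using True assms by (auto intro: mult_left_mono)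
      then have "h*y*exp (h*y) \<le> h*y*exp (h*K)" using assms elim by (intro mult_left_mono) auto
      with u have "exp (h*y) \<le> 1 + h * exp (h*K) * y" by (simp add: mult_ac)
      then have "exp (t*y) * exp (h*y) \<le> exp (t*y) * (1 + h * exp (h*K) * y)" by (intro mult_left_mono) auto
      then have le: "exp ((t+h)*y) \<le> exp (t*y) + h * exp (h*K) * (y * exp (t*y))"
        by (simp add: exp_add[symmetric] algebra_simps)
      have "ennreal (exp ((t+h)*y)) \<le> ennreal (exp (t*y) + h * exp (h*K) * (y * exp (t*y)))"
        using le by (rule ennreal_leI)
      also have "\<dots> = ennreal (exp (t*y)) + ennreal (h * exp (h*K)) * (ennreal y * ennreal (exp (t*y)))"
        using assms elim by (simp add: ennreal_plus ennreal_mult)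
      finally show ?thesis using True by simp
    qed simp
  qed
  also have "\<dots> = LK K t + ennreal (h * exp (h*K)) * DK K t"
    unfolding LK_def DK_def by (subst nn_integral_add) (auto simp: nn_integral_cmult)
  finally show ?thesis .
qed

lemma LK_bound: assumes "0 \<le> x" "Mf x = ennreal M0" "M0 \<ge> 0"
  shows "LK (real (Suc N)) x \<le> ennreal (exp (x * exp x * m * M0))"
proof -
  define K where "K = real (Suc N)"
  define h where "h = x / K"
  define b where "b = h * exp (h*K) * m * M0"
  have K0: "K > 0" by (simp add: K_def)
  have hK: "h*K = x" using K0 by (simp add: h_def)
  have h0: "h \<ge> 0" using assms K0 by (simp add: h_def)
  have b0: "b \<ge> 0" using h0 assms m_pos by (simp add: b_def)
  have ind: "LK K (real n * h) \<le> ennreal ((1+b)^n)" if "n \<le> Suc N" for n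
    using that
  proof (induction n)
    case 0
    have "LK K (real 0 * h) \<le> (\<integral>\<^sup>+y. 1 \<partial>\<mu>)"
      unfolding LK_def by (intro nn_integral_mono) (auto simp: indicator_def)
    then show ?case using prob_space.emeasure_space_1[OF mu_prob] by (simp add: nn_integral_const)
  next
    case (Suc n)
    define t where "t = real n * h"
    have t0: "0 \<le> t" using h0 by (simp add: t_def)
    have tx: "t \<le> x" using Suc.prems h0 hK K0 unfolding t_def K_def
      by (metis (mono_tags, lifting) Suc_le_lessD less_imp_le mult.commute mult_right_mono of_nat_le_iff)
    have "LK K (real (Suc n) * h) = LK K (t + h)" by (simp add: t_def algebra_simps)
    also have "\<dots> \<le> LK K t + ennreal (h * exp (h*K)) * DK K t"
      using LK_step[OF h0] K0 by simp
    also have "\<dots> \<le> LK K t + ennreal (h * exp (h*K)) * (ennreal m * (Mf x * LK K t))"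
      using DK_bound[OF t0, of K] Mf_mono[OF t0 tx]
      by (intro add_left_mono mult_left_mono order_trans[OF DK_bound[OF t0]] mult_right_mono) auto
    also have "\<dots> = LK K t + LK K t * ennreal b"
    proof -
      have eb: "ennreal b = ennreal (h * exp (h*K)) * ennreal m * ennreal M0"
        using h0 m_pos assms by (simp add: b_def ennreal_mult)
      show ?thesis by (simp add: eb assms(2) mult_ac)
    qed
    also have "\<dots> = LK K t * (1 + ennreal b)" by (simp add: distrib_left)
    also have "\<dots> \<le> ennreal ((1+b)^n) * (1 + ennreal b)"
      using Suc by (intro mult_right_mono) (auto simp: t_def)
    also have "\<dots> = ennreal ((1+b)^Suc n)"
    proof -
      have e1: "ennreal ((1+b)^n * (1+b)) = ennreal ((1+b)^n) * ennreal (1+b)"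
        by (rule ennreal_mult) (use b0 in auto)
      have e2: "ennreal (1+b) = 1 + ennreal b" using b0 by simp
      show ?thesis unfolding power_Suc2 e1 e2 ..
    qed
    finally show ?case .
  qed
  have "real (Suc N) * h = x" using hK by (simp add: K_def mult.commute)
  then have "LK K x \<le> ennreal ((1+b)^Suc N)" using ind[of "Suc N"] by simp
  also have "(1+b)^Suc N \<le> exp b ^ Suc N"
    using b0 by (intro power_mono) (auto simp: add.commute exp_ge_add_one_self)
  also have "exp b ^ Suc N = exp (real (Suc N) * b)" by (rule exp_of_nat_mult[symmetric])
  also have "real (Suc N) * b = x * exp x * m * M0"
  proof -
    have "real (Suc N) * b = (h * K) * exp (h*K) * m * M0" by (simp add: b_def K_def mult_ac)
    then show ?thesis using hK by simp
  qed
  finally show ?thesis by (simp add: K_def ennreal_leI)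
qed

lemma L_sup: "L x = (SUP N. LK (real (Suc N)) x)"
proof -
  have "L x = (\<integral>\<^sup>+y. (SUP N. ennreal (exp (x*y)) * indicator {..real (Suc N)} y) \<partial>\<mu>)"
    unfolding L_def
  proof (intro nn_integral_cong antisym)
    fix y
    obtain N where "y \<le> real (Suc N)"
      by (metis less_imp_le real_arch_simple of_nat_Suc order_trans le_add2 of_nat_le_iff le_less_trans reals_Archimedean2)
    then show "ennreal (exp (x*y)) \<le> (SUP N. ennreal (exp (x*y)) * indicator {..real (Suc N)} y)"
      by (intro SUP_upper2[of N]) auto
    show "(SUP N. ennreal (exp (x*y)) * indicator {..real (Suc N)} y) \<le> ennreal (exp (x*y))"
      by (intro SUP_least) (auto simp: indicator_def)
  qed
  also have "\<dots> = (SUP N. LK (real (Suc N)) x)" unfolding LK_def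
  proof (rule nn_integral_monotone_convergence_SUP)
    show "incseq (\<lambda>N y. ennreal (exp (x*y)) * indicator {..real (Suc N)} y)"
      by (intro incseq_SucI le_funI) (auto simp: indicator_def)
  qed simp
  finally show ?thesis .
qed

lemma boot: assumes "0 < c" "AE a in \<rho>. a \<le> c" "s1 > 0" "L s1 < \<infinity>" "0 \<le> x" "c * x < s1"
  shows "L x < \<infinity>"
proof -
  define s' where "s' = (c * x + s1)/2"
  have s': "0 \<le> s'" "s' < s1" "c * x \<le> s'" using assms by (auto simp: s'_def)
  have "Mf x \<le> Lsb (c * x)" by (rule Mf_le_c) (use assms in auto)
  also have "\<dots> \<le> Lsb s'" using s' assms by (intro Lsb_mono) auto
  also have "\<dots> < \<infinity>" using Lsb_fin[OF s'(1,2) assms(4)] .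
  finally obtain M0 where M0: "Mf x = ennreal M0" "M0 \<ge> 0"
    by (cases "Mf x") auto
  have "L x \<le> ennreal (exp (x * exp x * m * M0))"
    unfolding L_sup by (intro SUP_least LK_bound[OF assms(5) M0])
  then show ?thesis by (simp add: le_less_trans)
qed

end



lemma tel:
  fixes F :: "real \<Rightarrow> real"
  assumes c: "0 < c" "c < 1" and b: "\<beta> > 0"
    and gap: "\<And>t. 0 < t \<Longrightarrow> F t - F (c*t) \<le> \<beta> * t * (F t)^2"
    and pos: "\<And>t. 0 < t \<Longrightarrow> F t \<ge> 0"
    and s: "0 < s" "s \<le> (1-c)/(18*\<beta>)" "F s \<le> 3" "\<And>j. j \<ge> 1 \<Longrightarrow> F (c^j * s) \<le> 2"
    and N: "F (c^N * s) \<le> 3/2"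
  shows "F s \<le> 2"
proof -
  have le3: "F (c^j * s) \<le> 3" for j
    using s(3) s(4)[of j] by (cases "j = 0") auto
  have step: "F (c^j * s) - F (c^Suc j * s) \<le> 9 * \<beta> * s * c^j" for j
  proof -
    have pj: "0 < c^j * s" using c s by simp
    have "F (c^j * s) - F (c * (c^j * s)) \<le> \<beta> * (c^j * s) * (F (c^j * s))^2" by (rule gap[OF pj])
    also have "(F (c^j * s))^2 \<le> 3^2" using le3[of j] pos[OF pj] by (intro power_mono) auto
    then have "\<beta> * (c^j * s) * (F (c^j * s))^2 \<le> \<beta> * (c^j * s) * 3^2"
      using b pj by (intro mult_left_mono) auto
    finally show ?thesis by (simp add: mult_ac)
  qed
  have sum: "F s - F (c^n * s) \<le> 9 * \<beta> * s * (\<Sum>j<n. c^j)" for n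
  proof (induction n)
    case 0 then show ?case by simp
  next
    case (Suc n)
    have "F s - F (c^Suc n * s) = (F s - F (c^n * s)) + (F (c^n * s) - F (c^Suc n * s))" by simp
    also have "\<dots> \<le> 9 * \<beta> * s * (\<Sum>j<n. c^j) + 9 * \<beta> * s * c^n" using Suc step[of n] by linarith
    also have "\<dots> = 9 * \<beta> * s * (\<Sum>j<Suc n. c^j)" by (simp add: distrib_left)
    finally show ?case .
  qed
  have gs: "(\<Sum>j<N. c^j) \<le> 1/(1-c)"
  proof -
    have "(\<Sum>j<N. c^j) = (1 - c^N)/(1-c)" using c by (simp add: sum_gp_strict)
    also have "\<dots> \<le> 1/(1-c)" using c by (intro divide_right_mono) auto
    finally show ?thesis .
  qed
  have "9 * \<beta> * s * (\<Sum>j<N. c^j) \<le> 9 * \<beta> * s * (1/(1-c))"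
    using gs b s by (intro mult_left_mono) auto
  also have "\<dots> \<le> 9 * \<beta> * ((1-c)/(18*\<beta>)) * (1/(1-c))"
    using s b c by (intro mult_right_mono mult_left_mono) auto
  also have "\<dots> = 1/2" using b c by (simp add: field_simps)
  finally show ?thesis using sum[of N] N by linarith
qed

lemma grid:
  fixes F :: "real \<Rightarrow> real"
  assumes c: "0 < c" "c < 1" and b: "\<beta> > 0" and K: "K > 0"
    and mono: "\<And>s t. 0 < s \<Longrightarrow> s \<le> t \<Longrightarrow> F s \<le> F t"
    and jump: "\<And>t t'. 0 < t \<Longrightarrow> t \<le> t' \<Longrightarrow> F t' \<le> exp ((t'/t - 1) * K) * F t"
    and gap: "\<And>t. 0 < t \<Longrightarrow> F t - F (c*t) \<le> \<beta> * t * (F t)^2"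
    and pos: "\<And>t. 0 < t \<Longrightarrow> F t \<ge> 0"
    and lim: "\<And>t. 0 < t \<Longrightarrow> \<exists>N. F (c^N * t) \<le> 3/2"
    and t: "0 < t" "t \<le> (1-c)/(18*\<beta>)"
  shows "F t \<le> 2"
proof -
  define T where "T = (1-c)/(18*\<beta>)"
  have T0: "T > 0" using b c by (simp add: T_def)
  obtain N0 where N0: "F (c^N0 * T) \<le> 3/2" using lim[OF T0] by blast
  define t0 where "t0 = c^N0 * T"
  have t00: "t0 > 0" using c T0 by (simp add: t0_def)
  define r where "r = min (1/c) (1 + ln (3/2) / K)"
  have r1: "r > 1" using c K by (simp add: r_def)
  have rc: "c * r \<le> 1" using c by (simp add: r_def min_def field_simps)
  have rK: "(r - 1) * K \<le> ln (3/2)" using K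
    by (simp add: r_def min_def field_simps split: if_splits)
  have P: "\<forall>s. 0 < s \<and> s \<le> T \<and> s \<le> t0 * r^n \<longrightarrow> F s \<le> 2" for n
  proof (induction n)
    case 0
    show ?case
    proof (intro allI impI)
      fix s assume "0 < s \<and> s \<le> T \<and> s \<le> t0 * r^0"
      then have "F s \<le> F t0" by (intro mono) auto
      then show "F s \<le> 2" using N0 by (simp add: t0_def)
    qed
  next
    case (Suc n)
    show ?case
    proof (intro allI impI)
      fix s assume s: "0 < s \<and> s \<le> T \<and> s \<le> t0 * r^Suc n"
      show "F s \<le> 2"
      proof (cases "s \<le> t0 * r^n")
        case True then show ?thesis using Suc.IH s by blast
      next
        case False
        define u where "u = t0 * r^n"
        have u0: "u > 0" using t00 r1 by (simp add: u_def)
        have us: "u < s" using False by (simp add: u_def)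
        have su: "s \<le> u * r" using s by (simp add: u_def mult_ac)
        have Fu: "F u \<le> 2" using Suc.IH u0 us s by (auto simp: u_def)
        have "(s/u - 1) * K \<le> (r - 1) * K" using su u0 K by (intro mult_right_mono) (auto simp: field_simps)
        then have "(s/u - 1) * K \<le> ln (3/2)" using rK by linarith
        then have "exp ((s/u - 1) * K) \<le> exp (ln (3/2))" by (simp only: exp_le_cancel_iff)
        then have e: "exp ((s/u - 1) * K) \<le> 3/2" by simp
        have "F s \<le> exp ((s/u - 1) * K) * F u" using jump[OF u0] us by simp
        also have "\<dots> \<le> 3/2 * 2" using e Fu pos[OF u0] by (intro mult_mono) auto
        finally have F3: "F s \<le> 3" by simp
        have cj: "F (c^j * s) \<le> 2" if "j \<ge> 1" for j
        proof -
          have "c^j \<le> c^1" using c that by (intro power_decreasing) auto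
          then have "c^j * s \<le> c * s" using s by (intro mult_right_mono) auto
          also have "c * s \<le> c * (u * r)" using su c by simp
          also have "\<dots> \<le> u" using rc u0 by (simp add: mult_ac mult_left_le)
          finally have "c^j * s \<le> u" .
          moreover have "0 < c^j * s" using c s by simp
          ultimately show ?thesis using Suc.IH us s by (auto simp: u_def)
        qed
        obtain N where "F (c^N * s) \<le> 3/2" using lim s by blast
        from tel[OF c b gap pos _ _ F3 cj this] s show ?thesis by (simp add: T_def)
      qed
    qed
  qed
  obtain n where n: "T / t0 < r^n" using real_arch_pow[OF r1] by blast
  have "T \<le> t0 * r^n" using n t00 by (simp add: field_simps)
  then show ?thesis using P[of n] t by (simp add: T_def)
qed




context eq2 begin

definition "fK K t = (\<integral>\<^sup>+z. ennreal (exp (min (t*z) K)) \<partial>\<nu>)"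
definition "VK K t = (\<integral>\<^sup>+y. ennreal (exp (min (t*y) K)) \<partial>\<mu>)"

lemma fK_fin: "fK K t \<le> ennreal (exp K)"
proof -
  have "fK K t \<le> (\<integral>\<^sup>+z. ennreal (exp K) \<partial>\<nu>)" unfolding fK_def
    by (intro nn_integral_mono) auto
  also have "\<dots> = ennreal (exp K)" using prob_space.emeasure_space_1[OF nu_prob] by (simp add: nn_integral_const)
  finally show ?thesis .
qed

lemma fK_ge1: assumes "K \<ge> 0" "t \<ge> 0" shows "1 \<le> fK K t"
proof -
  have "1 = (\<integral>\<^sup>+z. 1 \<partial>\<nu>)" using prob_space.emeasure_space_1[OF nu_prob] by (simp add: nn_integral_const)
  also have "\<dots> \<le> fK K t" unfolding fK_def using nu_nonneg
    by (intro nn_integral_mono_AE, eventually_elim) (use assms in auto)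
  finally show ?thesis .
qed

lemma fK_mono: assumes "0 \<le> s" "s \<le> t" shows "fK K s \<le> fK K t"
  unfolding fK_def using nu_nonneg
proof (intro nn_integral_mono_AE, eventually_elim)
  case (elim z)
  have "s*z \<le> t*z" using assms elim by (intro mult_right_mono) auto
  then show ?case by simp
qed

lemma fK_jump: assumes "0 < t" "t \<le> t'" "K \<ge> 0"
  shows "fK K t' \<le> ennreal (exp ((t'/t - 1) * K)) * fK K t"
proof -
  have "fK K t' \<le> (\<integral>\<^sup>+z. ennreal (exp ((t'/t - 1) * K)) * ennreal (exp (min (t*z) K)) \<partial>\<nu>)"
    unfolding fK_def using nu_nonneg
  proof (intro nn_integral_mono_AE, eventually_elim)
    case (elim z)
    have d: "t'/t - 1 \<ge> 0" using assms by (simp add: field_simps)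
    have "min (t'*z) K \<le> min (t*z) K + (t'/t - 1) * K"
    proof (cases "t*z \<le> K")
      case True
      have "t'*z = t*z + (t'/t - 1) * (t*z)" using assms by (simp add: field_simps)
      also have "(t'/t - 1) * (t*z) \<le> (t'/t - 1) * K" using True d by (intro mult_left_mono) auto
      finally show ?thesis using True by simp
    next
      case False
      have "(t'/t - 1) * K \<ge> 0" using d assms by simp
      then show ?thesis using False by simp
    qed
    then have "exp (min (t'*z) K) \<le> exp ((t'/t - 1) * K) * exp (min (t*z) K)"
      by (simp add: exp_add[symmetric] add.commute)
    then show ?case by (simp add: ennreal_mult[symmetric] ennreal_leI)
  qed
  also have "\<dots> = ennreal (exp ((t'/t - 1) * K)) * fK K t"
    unfolding fK_def by (rule nn_integral_cmult) simp
  finally show ?thesis .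
qed

lemma E2: assumes "t \<ge> 0" "K \<ge> 0" shows "VK K t \<le> 1 + ennreal t * (ennreal m * fK K t)"
proof -
  have "VK K t \<le> (\<integral>\<^sup>+y. 1 + ennreal t * (ennreal y * ennreal (exp (min (t*y) K))) \<partial>\<mu>)"
    unfolding VK_def using mu_nonneg
  proof (intro nn_integral_mono_AE, eventually_elim)
    case (elim y)
    define u where "u = min (t*y) K"
    have u0: "0 \<le> u" "u \<le> t*y" using assms elim by (auto simp: u_def)
    have "1 - u \<le> exp (-u)" using exp_ge_add_one_self[of "-u"] by simp
    then have "(1 - u) * exp u \<le> exp (-u) * exp u" by (intro mult_right_mono) auto
    then have "exp u \<le> 1 + u * exp u" by (simp add: exp_minus field_simps)
    also have "u * exp u \<le> t*y * exp u" using u0 by (intro mult_right_mono) auto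
    finally have "exp u \<le> 1 + t * (y * exp u)" by (simp add: mult_ac)
    then have "ennreal (exp u) \<le> ennreal (1 + t * (y * exp u))" by (rule ennreal_leI)
    also have "\<dots> = 1 + ennreal t * (ennreal y * ennreal (exp u))"
      using assms elim by (simp add: ennreal_plus ennreal_mult)
    finally show ?case by (simp add: u_def)
  qed
  also have "\<dots> = 1 + ennreal t * (ennreal m * fK K t)"
    using prob_space.emeasure_space_1[OF mu_prob]
    by (subst nn_integral_add) (auto simp: nn_integral_cmult nn_integral_const dens fK_def)
  finally show ?thesis .
qed

lemma E1: assumes "AE a in \<rho>. a \<le> 1" "t \<ge> 0" "K \<ge> 0" "c \<ge> 0"
  shows "fK K t \<le> (fK K (c*t) * emeasure \<rho> {a. a \<le> c} + fK K t * emeasure \<rho> {a. c < a}) * VK K t"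
proof -
  have "fK K t = (\<integral>\<^sup>+a. \<integral>\<^sup>+x. \<integral>\<^sup>+y. ennreal (exp (min (t*(a*x+y)) K)) \<partial>\<mu> \<partial>\<nu> \<partial>\<rho>)"
    unfolding fK_def by (rule ident) simp
  also have "\<dots> \<le> (\<integral>\<^sup>+a. \<integral>\<^sup>+x. \<integral>\<^sup>+y. ennreal (exp (min (t*a*x) K)) * ennreal (exp (min (t*y) K)) \<partial>\<mu> \<partial>\<nu> \<partial>\<rho>)"
    using rho_pos
  proof (intro nn_integral_mono_AE, eventually_elim)
    case (elim a)
    show ?case using nu_nonneg
    proof (intro nn_integral_mono_AE, eventually_elim)
      case (elim x)
      show ?case using mu_nonneg
      proof (intro nn_integral_mono_AE, eventually_elim)
        case (elim y)
        have u: "0 \<le> t*a*x" using \<open>0 < a\<close> \<open>0 \<le> x\<close> assms by simp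
        have v: "0 \<le> t*y" using elim assms by simp
        have "min (t*(a*x+y)) K \<le> min (t*a*x) K + min (t*y) K"
          using u v assms(3) by (simp add: algebra_simps min_def)
        then have "exp (min (t*(a*x+y)) K) \<le> exp (min (t*a*x) K) * exp (min (t*y) K)"
          by (simp add: exp_add[symmetric])
        then show ?case by (simp add: ennreal_mult[symmetric] ennreal_leI)
      qed
    qed
  qed
  also have "\<dots> = (\<integral>\<^sup>+a. \<integral>\<^sup>+x. ennreal (exp (min (t*a*x) K)) \<partial>\<nu> \<partial>\<rho>) * VK K t"
    unfolding VK_def by (rule factor) auto
  also have "(\<integral>\<^sup>+a. \<integral>\<^sup>+x. ennreal (exp (min (t*a*x) K)) \<partial>\<nu> \<partial>\<rho>)
      \<le> (\<integral>\<^sup>+a. fK K (c*t) * indicator {a. a \<le> c} a + fK K t * indicator {a. c < a} a \<partial>\<rho>)"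
    using rho_pos assms(1)
  proof (intro nn_integral_mono_AE, eventually_elim)
    case (elim a)
    show ?case
    proof (cases "a \<le> c")
      case True
      have "(\<integral>\<^sup>+x. ennreal (exp (min (t*a*x) K)) \<partial>\<nu>) \<le> fK K (c*t)" unfolding fK_def using nu_nonneg
      proof (intro nn_integral_mono_AE, eventually_elim)
        case (elim x)
        have "a*(t*x) \<le> c*(t*x)" using True elim assms by (intro mult_right_mono) auto
        then show ?case by (simp add: mult_ac)
      qed
      then show ?thesis using True by simp
    next
      case False
      have "(\<integral>\<^sup>+x. ennreal (exp (min (t*a*x) K)) \<partial>\<nu>) \<le> fK K t" unfolding fK_def using nu_nonneg
      proof (intro nn_integral_mono_AE, eventually_elim)
        case (elim x)
        have "a*(t*x) \<le> 1*(t*x)" using \<open>a \<le> 1\<close> elim assms by (intro mult_right_mono) auto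
        then show ?case by (simp add: mult_ac)
      qed
      then show ?thesis using False by simp
    qed
  qed
  also have "\<dots> = fK K (c*t) * emeasure \<rho> {a. a \<le> c} + fK K t * emeasure \<rho> {a. c < a}"
    by (subst nn_integral_add) (auto simp: nn_integral_cmult_indicator sets_rho)
  finally show ?thesis by (simp add: mult_right_mono)
qed

lemma E5: assumes "0 < c" "c < 1" "K \<ge> 0" "t \<ge> 0"
  shows "(INF N. fK K (c^N * t)) = 1"
proof -
  define f where "f i z = ennreal (exp (min ((c^i * t) * z) K))" for i z
  have "(\<integral>\<^sup>+z. (INF i. f i z) \<partial>\<nu>) = (INF i. integral\<^sup>N \<nu> (f i))"
  proof (rule nn_integral_monotone_convergence_INF_AE')
    show "AE z in \<nu>. f (Suc i) z \<le> f i z" for i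
      using nu_nonneg
    proof (eventually_elim)
      case (elim z)
      have tz: "t * z \<ge> 0" using elim assms by simp
      have "c^Suc i * (t*z) \<le> c^i * (t*z)" using assms tz
        by (intro mult_right_mono) (auto simp: power_decreasing)
      then show ?case by (simp add: f_def mult_ac)
    qed
    show "f i \<in> borel_measurable \<nu>" for i unfolding f_def by measurable
    have f0: "f 0 = (\<lambda>z. ennreal (exp (min (t*z) K)))" by (simp add: f_def fun_eq_iff)
    have "integral\<^sup>N \<nu> (f 0) \<le> ennreal (exp K)" using fK_fin[of K t] by (simp add: f0 fK_def)
    then show "integral\<^sup>N \<nu> (f 0) < \<infinity>" by (simp add: le_less_trans)
  qed
  also have "(INF i. integral\<^sup>N \<nu> (f i)) = (INF N. fK K (c^N * t))"
  proof -
    have "f i = (\<lambda>z. ennreal (exp (min ((c^i * t) * z) K)))" for i by (simp add: f_def fun_eq_iff)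
    then show ?thesis by (simp add: fK_def)
  qed
  also have "(\<integral>\<^sup>+z. (INF i. f i z) \<partial>\<nu>) = (\<integral>\<^sup>+z. 1 \<partial>\<nu>)"
    using nu_nonneg
  proof (intro nn_integral_cong_AE, eventually_elim)
    case (elim z)
    have dec: "decseq (\<lambda>i. f i z)"
    proof (intro decseq_SucI)
      fix i
      have tz: "t * z \<ge> 0" using elim assms by simp
      have "c^Suc i * (t*z) \<le> c^i * (t*z)" using assms tz
        by (intro mult_right_mono) (auto simp: power_decreasing)
      then show "f (Suc i) z \<le> f i z" by (simp add: f_def mult_ac)
    qed
    have "(\<lambda>i. c^i) \<longlonglongrightarrow> 0" by (rule LIMSEQ_power_zero) (use assms in simp)
    then have "(\<lambda>i. f i z) \<longlonglongrightarrow> ennreal (exp (min ((0 * t) * z) K))"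
      unfolding f_def by (intro tendsto_intros tendsto_ennrealI) (use assms in auto)
    then have lim1: "(\<lambda>i. f i z) \<longlonglongrightarrow> 1" using assms by simp
    from LIMSEQ_INF[OF dec] lim1 show ?case using LIMSEQ_unique by blast
  qed
  also have "\<dots> = 1" using prob_space.emeasure_space_1[OF nu_prob] by (simp add: nn_integral_const)
  finally show ?thesis by simp
qed

end



lemma gap_alg:
  fixes F F' q q' V t m :: real
  assumes q: "0 < q" "q + q' = 1" "0 \<le> q'" and F: "0 \<le> F'" "F' \<le> F"
    and h1: "F \<le> (F'*q + F*q') * V" and h2: "V \<le> 1 + t*(m*F)" and t: "t \<ge> 0" "m > 0"
  shows "F - F' \<le> (m/q) * t * F^2"
proof -
  have S0: "0 \<le> F'*q + F*q'" using q F by simp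
  have S: "F'*q + F*q' \<le> F" proof -
    have "F'*q \<le> F*q" using F q by (intro mult_right_mono) auto
    then have "F'*q + F*q' \<le> F*q + F*q'" by simp
    also have "\<dots> = F" using q by (simp add: distrib_left[symmetric])
    finally show ?thesis .
  qed
  have "F \<le> (F'*q + F*q') * (1 + t*(m*F))" using h1 h2 S0 by (meson mult_left_mono order_trans)
  also have "\<dots> = (F'*q + F*q') + (F'*q + F*q') * (t*(m*F))" by (simp add: distrib_left)
  also have "(F'*q + F*q') * (t*(m*F)) \<le> F * (t*(m*F))"
    using S t F by (intro mult_right_mono) auto
  finally have "F \<le> F'*q + F*q' + F * (t*(m*F))" by simp
  moreover have "q' = 1 - q" using q by simp
  ultimately have "q * (F - F') \<le> t * m * F^2" by (simp add: algebra_simps power2_eq_square)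
  then have "F - F' \<le> (t * m * F^2) / q" using q by (simp add: field_simps)
  then show ?thesis by (simp add: field_simps)
qed




context eq2 begin

lemma Lsb_sup: "Lsb x = (SUP N. fK (real (Suc N)) x)"
proof -
  have "Lsb x = (\<integral>\<^sup>+z. (SUP N. ennreal (exp (min (x*z) (real (Suc N))))) \<partial>\<nu>)"
    unfolding Lsb_def
  proof (intro nn_integral_cong antisym)
    fix z
    obtain N where "x*z \<le> real (Suc N)"
      by (metis real_arch_simple of_nat_Suc order_trans le_add2 of_nat_le_iff)
    then show "ennreal (exp (x*z)) \<le> (SUP N. ennreal (exp (min (x*z) (real (Suc N)))))"
      by (intro SUP_upper2[of N]) auto
    show "(SUP N. ennreal (exp (min (x*z) (real (Suc N))))) \<le> ennreal (exp (x*z))"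
      by (intro SUP_least) auto
  qed
  also have "\<dots> = (SUP N. fK (real (Suc N)) x)" unfolding fK_def
  proof (rule nn_integral_monotone_convergence_SUP)
    show "incseq (\<lambda>N z. ennreal (exp (min (x*z) (real (Suc N)))))"
      by (intro incseq_SucI le_funI) auto
  qed simp
  finally show ?thesis .
qed

lemma L_le_Lsb: assumes "T > 0" shows "L T \<le> ennreal (exp T) + ennreal m * Lsb T"
proof -
  have "L T \<le> (\<integral>\<^sup>+y. ennreal (exp T) + ennreal y * ennreal (exp (T*y)) \<partial>\<mu>)"
    unfolding L_def using mu_nonneg
  proof (intro nn_integral_mono_AE, eventually_elim)
    case (elim y)
    show ?case
    proof (cases "y \<le> 1")
      case True
      have "T*y \<le> T" using True assms by (simp add: mult_left_le)
      then have "ennreal (exp (T*y)) \<le> ennreal (exp T)" by (intro ennreal_leI) simp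
      then show ?thesis by (simp add: add_increasing2)
    next
      case False
      have "exp (T*y) \<le> y * exp (T*y)" using False by simp
      then have "ennreal (exp (T*y)) \<le> ennreal y * ennreal (exp (T*y))"
        by (simp add: ennreal_mult[symmetric] ennreal_leI)
      then show ?thesis by (simp add: add_increasing)
    qed
  qed
  also have "\<dots> = ennreal (exp T) + ennreal m * Lsb T"
    using prob_space.emeasure_space_1[OF mu_prob]
    by (subst nn_integral_add) (auto simp: nn_integral_const dens Lsb_def)
  finally show ?thesis .
qed

lemma exists_c: assumes A1: "AE a in \<rho>. a \<le> 1"
  shows "\<exists>c. 0 < c \<and> c < 1 \<and> emeasure \<rho> {a. a \<le> c} > 0"
proof (rule ccontr)
  assume "\<not> ?thesis"
  then have z: "emeasure \<rho> {a. a \<le> c} = 0" if "0 < c" "c < 1" for c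
    using that by auto
  have "{a. a < 1} \<subseteq> {a. a \<le> 0} \<union> (\<Union>n. {a. a \<le> 1 - 1/(real n + 2)})"
  proof
    fix a assume "a \<in> {a. a < (1::real)}"
    then have a1: "a < 1" by simp
    show "a \<in> {a. a \<le> 0} \<union> (\<Union>n. {a. a \<le> 1 - 1/(real n + 2)})"
    proof (cases "a \<le> 0")
      case False
      obtain n where n: "1/(1-a) < real n" using reals_Archimedean2 by blast
      have "1/(real n + 2) \<le> 1 - a"
      proof -
        have "0 < 1 - a" using a1 by simp
        then have "1 < (1-a) * real n" using n by (simp add: field_simps)
        then have "1 \<le> (1-a) * (real n + 2)" using a1 by (simp add: algebra_simps)
        then show ?thesis by (simp add: field_simps)
      qed
      then have "a \<le> 1 - 1/(real n + 2)" by linarith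
      then show ?thesis by blast
    qed simp
  qed
  moreover have "{a. a \<le> 0} \<union> (\<Union>n. {a. a \<le> 1 - 1/(real n + 2)}) \<in> null_sets \<rho>"
  proof (intro null_sets.Un null_sets_UN)
    have "AE a in \<rho>. a \<notin> {a. a \<le> 0}" using rho_pos by eventually_elim auto
    then show "{a. a \<le> (0::real)} \<in> null_sets \<rho>"
      using AE_iff_null_sets[of "{a. a \<le> (0::real)}" \<rho>] by (simp add: sets_rho)
    fix n :: nat
    have "0 < 1 - 1/(real n + 2)" "1 - 1/(real n + 2) < (1::real)" by (auto simp: field_simps)
    from z[OF this] show "{a. a \<le> 1 - 1/(real n + 2)} \<in> null_sets \<rho>"
      by (auto simp: null_sets_def sets_rho)
  qed
  moreover have "{a. a < (1::real)} \<in> sets \<rho>" by (simp add: sets_rho)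
  ultimately have "{a. a < 1} \<in> null_sets \<rho>" using null_sets_subset by blast
  then have "AE a in \<rho>. a \<notin> {a. a < 1}" by (rule AE_not_in)
  with A1 have A: "AE a in \<rho>. a = 1" by eventually_elim auto
  have "Mf (-1) = (\<integral>\<^sup>+a. Lsb (-1) \<partial>\<rho>)" unfolding Mf_def Lsb_def
    using A by (intro nn_integral_cong_AE) (auto elim!: eventually_mono)
  also have "\<dots> = Lsb (-1)" using prob_space.emeasure_space_1[OF rho_prob] by (simp add: nn_integral_const)
  finally have Mf1: "Mf (-1) = Lsb (-1)" .
  have Lsb_le: "Lsb (-1) \<le> 1"
  proof -
    have "Lsb (-1) \<le> (\<integral>\<^sup>+z. 1 \<partial>\<nu>)" unfolding Lsb_def using nu_nonneg
      by (intro nn_integral_mono_AE, eventually_elim) auto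
    then show ?thesis using prob_space.emeasure_space_1[OF nu_prob] by (simp add: nn_integral_const)
  qed
  have Lsb_ne: "Lsb (-1) \<noteq> 0"
  proof
    assume "Lsb (-1) = 0"
    then have "AE z in \<nu>. ennreal (exp (-1 * z)) = 0" unfolding Lsb_def
      by (subst (asm) nn_integral_0_iff_AE) auto
    then have "AE z in \<nu>. False" by eventually_elim simp
    then show False using prob_space.AE_False[OF nu_prob] by simp
  qed
  obtain l where l: "Lsb (-1) = ennreal l" "l > 0" using Lsb_le Lsb_ne
    by (cases "Lsb (-1)") (auto simp: top_unique)
  have Lm1: "L (-1) \<le> 1"
  proof -
    have "L (-1) \<le> (\<integral>\<^sup>+y. 1 \<partial>\<mu>)" unfolding L_def using mu_nonneg
      by (intro nn_integral_mono_AE, eventually_elim) auto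
    then show ?thesis using prob_space.emeasure_space_1[OF mu_prob] by (simp add: nn_integral_const)
  qed
  obtain r where r: "L (-1) = ennreal r" "r \<ge> 0" using Lm1 by (cases "L (-1)") (auto simp: top_unique)
  have "ennreal l = ennreal l * ennreal r" using F1[of "-1"] Mf1 l r by simp
  then have "l = l * r" using l r by (simp add: ennreal_mult[symmetric])
  then have "r = 1" using l by simp
  then have L1: "L (-1) = 1" using r by simp
  have "(\<integral>\<^sup>+y. ennreal (1 - exp (-1 * y)) \<partial>\<mu>) + L (-1) = (\<integral>\<^sup>+y. ennreal (1 - exp (-1 * y)) + ennreal (exp (-1 * y)) \<partial>\<mu>)"
    unfolding L_def by (subst nn_integral_add) auto
  also have "\<dots> = (\<integral>\<^sup>+y. 1 \<partial>\<mu>)" using mu_nonneg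
    by (intro nn_integral_cong_AE, eventually_elim) (auto simp: ennreal_plus[symmetric] simp del: ennreal_plus)
  also have "\<dots> = 1" using prob_space.emeasure_space_1[OF mu_prob] by (simp add: nn_integral_const)
  finally have "(\<integral>\<^sup>+y. ennreal (1 - exp (-1 * y)) \<partial>\<mu>) + 1 = 0 + 1" using L1 by simp
  then have "1 + (\<integral>\<^sup>+y. ennreal (1 - exp (-1 * y)) \<partial>\<mu>) = 1 + 0" by (simp add: add.commute)
  then have "(\<integral>\<^sup>+y. ennreal (1 - exp (-1 * y)) \<partial>\<mu>) = 0"
    unfolding ennreal_add_left_cancel by simp
  then have "AE y in \<mu>. ennreal (1 - exp (-1 * y)) = 0"
    by (subst (asm) nn_integral_0_iff_AE) auto
  with mu_nonneg have "AE y in \<mu>. ennreal y = 0"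
    by eventually_elim (auto simp: ennreal_eq_0_iff)
  then have "(\<integral>\<^sup>+y. ennreal y \<partial>\<mu>) = 0" by (simp add: nn_integral_0_iff_AE)
  then show False using nn_m m_pos by simp
qed

lemma ifpart: assumes A1: "AE a in \<rho>. a \<le> 1" shows "\<exists>s>0. L s < \<infinity>"
proof -
  obtain c where c: "0 < c" "c < 1" and qpos: "emeasure \<rho> {a. a \<le> c} > 0"
    using exists_c[OF A1] by blast
  interpret rho: prob_space \<rho> by (rule rho_prob)
  define q where "q = measure \<rho> {a. a \<le> c}"
  define q' where "q' = measure \<rho> {a. c < a}"
  have qe: "emeasure \<rho> {a. a \<le> c} = ennreal q" unfolding q_def by (rule rho.emeasure_eq_measure)
  have qe': "emeasure \<rho> {a. c < a} = ennreal q'" unfolding q'_def by (rule rho.emeasure_eq_measure)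
  have q0: "q > 0" using qpos qe by simp
  have q'0: "q' \<ge> 0" by (simp add: q'_def)
  have qq: "q + q' = 1"
  proof -
    have "{a. c < a} = space \<rho> - {a. a \<le> c}" by (auto simp: space_rho)
    then have "q' = 1 - q" unfolding q'_def q_def by (simp add: rho.prob_compl sets_rho)
    then show ?thesis by simp
  qed
  define \<beta> where "\<beta> = m / q"
  have b0: "\<beta> > 0" using m_pos q0 by (simp add: \<beta>_def)
  define T where "T = (1-c)/(18*\<beta>)"
  have T0: "T > 0" using c b0 by (simp add: T_def)
  have fT: "fK (real (Suc N)) T \<le> 2" for N
  proof -
    define K where "K = real (Suc N)"
    have K0: "K > 0" by (simp add: K_def)
    define F where "F t = enn2real (fK K t)" for t
    have fin: "fK K t = ennreal (F t)" for t
    proof -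
      have "fK K t < \<infinity>" using fK_fin[of K t] by (simp add: le_less_trans)
      then show ?thesis by (simp add: F_def less_top[symmetric] ennreal_enn2real)
    qed
    have F0: "F t \<ge> 0" for t by (simp add: F_def)
    have "F T \<le> 2"
    proof (rule grid[OF c b0 K0, where F=F])
      show "F s \<le> F t" if "0 < s" "s \<le> t" for s t
        using fK_mono[of s t K] that F0[of t] by (simp add: fin ennreal_le_iff)
      show "F t' \<le> exp ((t'/t - 1) * K) * F t" if "0 < t" "t \<le> t'" for t t'
      proof -
        have "ennreal (F t') \<le> ennreal (exp ((t'/t - 1) * K)) * ennreal (F t)"
          using fK_jump[OF that, of K] K0 by (simp add: fin)
        also have "\<dots> = ennreal (exp ((t'/t - 1) * K) * F t)" using F0 by (simp add: ennreal_mult)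
        finally show ?thesis using F0 by (simp add: ennreal_le_iff)
      qed
      show "F t - F (c*t) \<le> \<beta> * t * (F t)^2" if tpos: "0 < t" for t
      proof -
        obtain V where V: "VK K t = ennreal V" "V \<ge> 0"
        proof -
          have "VK K t \<le> 1 + ennreal t * (ennreal m * fK K t)" using E2[of t K] tpos K0 by simp
          also have "\<dots> < \<infinity>" by (simp add: fin ennreal_mult_less_top)
          finally show ?thesis using that by (cases "VK K t") auto
        qed
        have "ennreal (F t) \<le> (ennreal (F (c*t)) * ennreal q + ennreal (F t) * ennreal q') * ennreal V"
          using E1[OF A1, of t K c] tpos K0 c by (simp add: fin qe qe' V)
        also have "\<dots> = ennreal ((F (c*t) * q + F t * q') * V)"
          using F0 q0 q'0 V by (simp add: ennreal_mult ennreal_plus)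
        finally have h1: "F t \<le> (F (c*t) * q + F t * q') * V"
          using F0 q0 q'0 V by (subst (asm) ennreal_le_iff) auto
        have "ennreal V \<le> 1 + ennreal t * (ennreal m * ennreal (F t))"
          using E2[of t K] tpos K0 by (simp add: fin V)
        also have "\<dots> = ennreal (1 + t * (m * F t))"
          using F0 tpos m_pos by (simp add: ennreal_mult ennreal_plus)
        finally have h2: "V \<le> 1 + t * (m * F t)"
          using F0 tpos m_pos by (subst (asm) ennreal_le_iff) auto
        have mono: "F (c*t) \<le> F t" using fK_mono[of "c*t" t K] c tpos F0 by (simp add: fin)
        have "F t - F (c*t) \<le> (m/q) * t * (F t)^2"
          by (rule gap_alg[OF q0 qq q'0 F0 mono h1 h2]) (use tpos m_pos in auto)
        then show ?thesis by (simp add: \<beta>_def)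
      qed
      show "F t \<ge> 0" if "0 < t" for t by (rule F0)
      show "\<exists>N. F (c^N * t) \<le> 3/2" if "0 < t" for t
      proof -
        have "(INF N. fK K (c^N * t)) < ennreal (3/2)" using E5[OF c, of K t] K0 that by simp
        then obtain N where "fK K (c^N * t) < ennreal (3/2)" by (auto simp: INF_less_iff)
        then have "F (c^N * t) \<le> 3/2" using F0 by (simp add: fin ennreal_less_iff)
        then show ?thesis by blast
      qed
      show "0 < T" by (rule T0)
      show "T \<le> (1-c)/(18*\<beta>)" by (simp add: T_def)
    qed
    then have "ennreal (F T) \<le> ennreal 2" by (rule ennreal_leI)
    then show ?thesis using fin[of T] by (simp add: K_def)
  qed
  have "Lsb T \<le> 2" unfolding Lsb_sup by (intro SUP_least fT)
  then have "L T \<le> ennreal (exp T) + ennreal m * 2"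
    using L_le_Lsb[OF T0] by (meson add_left_mono mult_left_mono order_trans zero_le)
  also have "\<dots> < \<infinity>" by (simp add: ennreal_mult_less_top)
  finally show ?thesis using T0 by blast
qed

end



lemma entire_char:
  fixes M :: "real measure"
  assumes P: "prob_space M" and S: "sets M = sets borel"
    and fin: "\<And>s. (\<integral>\<^sup>+x. ennreal (exp (s*x)) \<partial>M) < \<infinity>"
  shows "\<exists>F. F holomorphic_on UNIV \<and> (\<forall>t::real. F (complex_of_real t) = char M t)"
proof -
  have S'[measurable_cong]: "sets M = sets borel" by (rule S)
  interpret prob_space M by (rule P)
  define B where "B n r = (\<integral>\<^sup>+x. ennreal ((r * \<bar>x\<bar>)^n / fact n) \<partial>M)" for n r
  have sumB: "(\<Sum>n. B n r) < \<infinity>" if r: "r \<ge> 0" for r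
  proof -
    have "(\<Sum>n. B n r) = (\<integral>\<^sup>+x. (\<Sum>n. ennreal ((r * \<bar>x\<bar>)^n / fact n)) \<partial>M)"
      unfolding B_def by (rule nn_integral_suminf[symmetric]) measurable
    also have "\<dots> = (\<integral>\<^sup>+x. ennreal (exp (r * \<bar>x\<bar>)) \<partial>M)"
    proof (intro nn_integral_cong)
      fix x
      have "(\<lambda>n. (r * \<bar>x\<bar>)^n / fact n) sums exp (r * \<bar>x\<bar>)"
        using exp_converges[of "r * \<bar>x\<bar>"] by (simp add: divide_inverse mult.commute)
      then show "(\<Sum>n. ennreal ((r * \<bar>x\<bar>)^n / fact n)) = ennreal (exp (r * \<bar>x\<bar>))"
        using r by (subst suminf_ennreal2) (auto simp: sums_iff)
    qed
    also have "\<dots> \<le> (\<integral>\<^sup>+x. ennreal (exp (r*x)) + ennreal (exp ((-r)*x)) \<partial>M)"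
      by (intro nn_integral_mono) (auto simp: abs_if ennreal_plus[symmetric] simp del: ennreal_plus)
    also have "\<dots> = (\<integral>\<^sup>+x. ennreal (exp (r*x)) \<partial>M) + (\<integral>\<^sup>+x. ennreal (exp ((-r)*x)) \<partial>M)"
      by (rule nn_integral_add) auto
    also have "\<dots> < \<infinity>" using fin[of r] fin[of "-r"] by simp
    finally show ?thesis .
  qed
  have Bfin: "B n r < \<infinity>" if "r \<ge> 0" for n r
    using sumB[OF that] by (rule ennreal_suminf_lessD)
  have intB: "integrable M (\<lambda>x. (r * \<bar>x\<bar>)^n / fact n)" if "r \<ge> 0" for n r
    by (rule integrableI_bounded) (use Bfin[OF that, of n] that in \<open>auto simp: B_def\<close>)
  have eqB: "ennreal (\<integral>x. (r * \<bar>x\<bar>)^n / fact n \<partial>M) = B n r" if "r \<ge> 0" for n r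
    unfolding B_def using that by (subst nn_integral_eq_integral[OF intB[OF that]]) auto
  have sumI: "summable (\<lambda>n. \<integral>x. (r * \<bar>x\<bar>)^n / fact n \<partial>M)" if "r \<ge> 0" for r
    by (rule summable_suminf_not_top) (use that sumB[OF that] eqB[OF that] in auto)
  define mom where "mom n = (\<integral>x. x^n \<partial>M)" for n
  define c where "c n = complex_of_real (mom n / fact n) * \<i>^n" for n
  have momb: "\<bar>mom n\<bar> / fact n * r^n \<le> (\<integral>x. (r * \<bar>x\<bar>)^n / fact n \<partial>M)" if "r \<ge> 0" for n r
  proof -
    have "\<bar>mom n\<bar> \<le> (\<integral>x. \<bar>x^n\<bar> \<partial>M)" unfolding mom_def by (rule integral_abs_bound)
    then have "\<bar>mom n\<bar> / fact n * r^n \<le> (\<integral>x. \<bar>x\<bar>^n \<partial>M) / fact n * r^n"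
      using that by (intro mult_right_mono divide_right_mono) (auto simp: power_abs)
    also have "\<dots> = (\<integral>x. (r * \<bar>x\<bar>)^n / fact n \<partial>M)"
      by (simp add: power_mult_distrib mult_ac)
    finally show ?thesis .
  qed
  have summ: "summable (\<lambda>n. c n * z^n)" for z
  proof (rule summable_norm_cancel, rule summable_comparison_test'[OF sumI[of "cmod z"]])
    fix n :: nat
    have "norm (c n * z^n) = \<bar>mom n\<bar> / fact n * cmod z ^ n"
      by (simp add: c_def norm_mult norm_power norm_divide)
    also have "\<dots> \<le> (\<integral>x. (cmod z * \<bar>x\<bar>)^n / fact n \<partial>M)" by (rule momb) simp
    finally show "norm (norm (c n * z^n)) \<le> (\<integral>x. (cmod z * \<bar>x\<bar>)^n / fact n \<partial>M)" by simp
  qed simp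
  define F where "F z = (\<Sum>n. c n * z^n)" for z
  have hol: "F holomorphic_on UNIV"
    unfolding holomorphic_on_def field_differentiable_def F_def
    using termdiffs_strong_converges_everywhere[OF summ] by (blast intro: has_field_derivative_at_within)
  have chr: "F (complex_of_real t) = char M t" for t
  proof -
    define f where "f n x = complex_of_real ((t*x)^n / fact n) * \<i>^n" for n x
    have fsum: "(\<lambda>n. f n x) sums iexp (t*x)" for x
    proof -
      have "(\<lambda>n. (\<i> * complex_of_real (t*x))^n /\<^sub>R fact n) sums iexp (t*x)" by (rule exp_converges)
      moreover have "(\<i> * complex_of_real (t*x))^n /\<^sub>R fact n = f n x" for n
        by (simp add: f_def power_mult_distrib scaleR_conv_of_real divide_inverse mult_ac)
      ultimately show ?thesis by simp
    qed
    have normf: "norm (f n x) = (\<bar>t\<bar> * \<bar>x\<bar>)^n / fact n" for n x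
      by (simp add: f_def norm_mult norm_power norm_divide abs_mult power_mult_distrib)
    have fn_eq: "f n = (\<lambda>x. complex_of_real ((t*x)^n / fact n) * \<i>^n)" for n by (simp add: fun_eq_iff f_def)
    have intf: "integrable M (f n)" for n
    proof -
      have "integrable M (\<lambda>x. (t*x)^n / fact n)"
        by (rule Bochner_Integration.integrable_bound[OF intB[of "\<bar>t\<bar>" n]])
           (auto simp: abs_mult power_abs power_mult_distrib)
      then have "integrable M (\<lambda>x. complex_of_real ((t*x)^n / fact n))" by (rule integrable_of_real)
      then have "integrable M (\<lambda>x. complex_of_real ((t*x)^n / fact n) * \<i>^n)" by (rule integrable_mult_left)
      then show ?thesis by (simp only: fn_eq)
    qed
    have "char M t = (\<integral>x. (\<Sum>n. f n x) \<partial>M)"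
      unfolding char_def using fsum by (simp add: sums_iff)
    also have "\<dots> = (\<Sum>n. integral\<^sup>L M (f n))"
    proof (rule integral_suminf[OF intf])
      show "AE x in M. summable (\<lambda>n. norm (f n x))"
      proof (rule AE_I2)
        fix x
        show "summable (\<lambda>n. norm (f n x))" unfolding normf
          using summable_exp[of "\<bar>t\<bar> * \<bar>x\<bar>"] by (simp add: divide_inverse mult.commute)
      qed
      show "summable (\<lambda>n. \<integral>x. norm (f n x) \<partial>M)" unfolding normf by (rule sumI) simp
    qed
    also have "\<dots> = (\<Sum>n. c n * (complex_of_real t)^n)"
    proof (intro suminf_cong)
      fix n
      have "integral\<^sup>L M (f n) = integral\<^sup>L M (\<lambda>x. complex_of_real ((t*x)^n / fact n)) * \<i>^n"
        unfolding fn_eq by (rule integral_mult_left_zero)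
      also have "\<dots> = complex_of_real (\<integral>x. (t*x)^n / fact n \<partial>M) * \<i>^n"
        by (simp only: integral_complex_of_real)
      also have "(\<integral>x. (t*x)^n / fact n \<partial>M) = t^n * mom n / fact n"
        by (simp add: mom_def power_mult_distrib)
      finally show "integral\<^sup>L M (f n) = c n * (complex_of_real t)^n"
        by (simp add: c_def mult_ac)
    qed
    finally show ?thesis by (simp add: F_def)
  qed
  from hol chr show ?thesis by blast
qed




context eq2 begin

lemma L_mono: assumes "0 \<le> x" "x \<le> y" shows "L x \<le> L y"
  unfolding L_def using mu_nonneg
  by (intro nn_integral_mono_AE, eventually_elim) (use assms in \<open>auto intro: mult_right_mono\<close>)

lemma L_neg: assumes "s \<le> 0" shows "L s < \<infinity>"
proof -
  have "L s \<le> (\<integral>\<^sup>+y. 1 \<partial>\<mu>)" unfolding L_def using mu_nonneg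
    by (intro nn_integral_mono_AE, eventually_elim) (use assms in \<open>auto simp: mult_nonpos_nonneg\<close>)
  also have "\<dots> = 1" using prob_space.emeasure_space_1[OF mu_prob] by (simp add: nn_integral_const)
  finally show ?thesis by (simp add: le_less_trans)
qed

lemma AE_le_esssup: "AE a in \<rho>. ereal a \<le> esssup \<rho> (\<lambda>a. ereal a)"
  by (rule esssup_AE)

lemma allfin: assumes "esssup \<rho> (\<lambda>a. ereal a) < 1" shows "L s < \<infinity>"
proof -
  obtain c0 where c0: "esssup \<rho> (\<lambda>a. ereal a) < ereal c0" "ereal c0 < 1"
    using ereal_dense2[OF assms] by blast
  define c where "c = max c0 (1/2)"
  have c: "0 < c" "c < 1" using c0 by (auto simp: c_def)
  have Ac: "AE a in \<rho>. a \<le> c" using AE_le_esssup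
  proof eventually_elim
    case (elim a)
    from le_less_trans[OF elim c0(1)] have "a < c0" by simp
    then show ?case by (simp add: c_def)
  qed
  have A1: "AE a in \<rho>. a \<le> 1" using Ac by eventually_elim (use c in simp)
  obtain s0 where s0: "s0 > 0" "L s0 < \<infinity>" using ifpart[OF A1] by blast
  have claim: "\<forall>x. 0 \<le> x \<and> x < s0 / c^n \<longrightarrow> L x < \<infinity>" for n
  proof (induction n)
    case 0
    show ?case
    proof (intro allI impI)
      fix x assume "0 \<le> x \<and> x < s0 / c^0"
      then have "L x \<le> L s0" by (intro L_mono) auto
      then show "L x < \<infinity>" using s0 by (simp add: le_less_trans)
    qed
  next
    case (Suc n)
    show ?case
    proof (intro allI impI)
      fix x assume x: "0 \<le> x \<and> x < s0 / c^Suc n"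
      define s1 where "s1 = (c * x + s0 / c^n) / 2"
      have cn: "c^n > 0" using c by simp
      have lt: "c * x < s0 / c^n" using x c cn by (simp add: field_simps)
      define w where "w = s0 / c^n"
      have lt': "c * x < w" using lt by (simp add: w_def)
      have s1a: "c * x < s1" using lt' unfolding s1_def w_def[symmetric] by (simp add: field_simps)
      have s1b: "s1 < s0 / c^n" using lt' unfolding s1_def w_def[symmetric] by (simp add: field_simps)
      note s1 = s1a s1b
      have s10: "s1 > 0" using x c s1(1) by (smt (verit) mult_nonneg_nonneg)
      have "L s1 < \<infinity>" using Suc.IH s1 s10 by auto
      from boot[OF c(1) Ac s10 this] show "L x < \<infinity>" using x s1 by auto
    qed
  qed
  show ?thesis
  proof (cases "s \<le> 0")
    case True then show ?thesis by (rule L_neg)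
  next
    case False
    have ic: "1/c > 1" using c by simp
    obtain n where n: "s/s0 < (1/c)^n" using real_arch_pow[OF ic] by blast
    have "s < s0 / c^n" using n s0 c by (simp add: field_simps power_one_over)
    then show ?thesis using claim[of n] False by auto
  qed
qed

end

theorem proposition1p4:
  fixes \<rho> \<mu> :: "real measure"
  assumes "prob_space \<rho>" and "sets \<rho> = sets borel"
    and "AE a in \<rho>. a > 0"
    and "solves_eq2 \<rho> \<mu>"
  shows "((\<exists>s>0. (\<integral>\<^sup>+ x. ennreal (exp (s * x)) \<partial>\<mu>) < \<infinity>)
           \<longleftrightarrow> esssup \<rho> (\<lambda>a. ereal a) \<le> 1)
      \<and> (esssup \<rho> (\<lambda>a. ereal a) < 1 \<longrightarrow>
           (\<forall>s::real. (\<integral>\<^sup>+ x. ennreal (exp (s * x)) \<partial>\<mu>) < \<infinity>) \<and>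
           (\<exists>F. F holomorphic_on UNIV \<and> (\<forall>t::real. F (complex_of_real t) = char \<mu> t)))"
proof -
  interpret eq2 \<rho> \<mu> by (intro eq2.intro assms)
  have A: "(\<exists>s>0. L s < \<infinity>) \<longleftrightarrow> esssup \<rho> (\<lambda>a. ereal a) \<le> 1"
  proof
    assume "\<exists>s>0. L s < \<infinity>"
    then show "esssup \<rho> (\<lambda>a. ereal a) \<le> 1" using onlyif by blast
  next
    assume e: "esssup \<rho> (\<lambda>a. ereal a) \<le> 1"
    have "AE a in \<rho>. a \<le> 1" using AE_le_esssup
      by eventually_elim (use e in \<open>auto dest: order_trans\<close>)
    then show "\<exists>s>0. L s < \<infinity>" by (rule ifpart)
  qed
  have B: "esssup \<rho> (\<lambda>a. ereal a) < 1 \<longrightarrow> (\<forall>s. L s < \<infinity>) \<and>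
           (\<exists>F. F holomorphic_on UNIV \<and> (\<forall>t::real. F (complex_of_real t) = char \<mu> t))"
  proof
    assume e: "esssup \<rho> (\<lambda>a. ereal a) < 1"
    have all: "\<forall>s. L s < \<infinity>" using allfin[OF e] by blast
    have "\<exists>F. F holomorphic_on UNIV \<and> (\<forall>t::real. F (complex_of_real t) = char \<mu> t)"
      by (rule entire_char[OF mu_prob sets_mu]) (use all in \<open>simp add: L_def\<close>)
    with all show "(\<forall>s. L s < \<infinity>) \<and> (\<exists>F. F holomorphic_on UNIV \<and> (\<forall>t::real. F (complex_of_real t) = char \<mu> t))" by blast
  qed
  from A B show ?thesis by (simp add: L_def)
qed


end
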